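(* Let $(X,d)$ be a metric space and let $\ell:X\to[0,+\infty)$ be a lower semicontinuous function with $\inf_X\ell=0$. Then: (i) if $\lambda>0$, the equation $(\mathcal{G}_\lambda)$ has at least one solution in $\mathrm{LSC}(X)$; (ii) if $\ell$ satisfies hypothesis $(H_0)$, then $(\mathcal{G}_0)$ has at least one solution in $\mathrm{LSC}(X)$. In addition, if $X$ is complete, then $(\mathcal{G}_0)$ has a solution if and only if $\ell$ satisfies $(H_0)$.
   Context: Global slope: $G[u](x)=\sup_{y\neq x}\frac{(u(x)-u(y))_+}{d(x,y)}$ if $u(x)<+\infty$, $G[u](x)=+\infty$ otherwise. For $\lambda\ge0$, equation $(\mathcal{G}_\lambda)$: $\lambda u+G[u]=\ell$ on $X$ with $\inf_X u=0$. A solution is a lower semicontinuous $u:X\to\mathbb{R}\cup\{+\infty\}$ with $\inf_X u=0$ and $\lambda u(x)+G[u](x)=\ell(x)$ for all $x\in X$. $\mathrm{LSC}(X)$ denotes the set of real-valued lower semicontinuous functions on $X$. Hypothesis $(H_0)$: there is a sequence $\{\bar x_n\}_n\subset X$ with $\sum_{n=0}^\infty\ell(\bar x_n)d(\bar x_n,\bar x_{n+1})<+\infty$ and $\lim_{n\to\infty}\ell(\bar x_n)=0$. *)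

theory Defs
  imports "HOL-Analysis.Analysis"
begin

definition lsc :: "('a::topological_space \<Rightarrow> ereal) \<Rightarrow> bool" where
  "lsc u \<longleftrightarrow> (\<forall>c::ereal. closed {x. u x \<le> c})"

text \<open>The supremum of these nonnegative
  quantities is taken to be 0 when X has only one point.\<close>
definition gslope :: "('a::metric_space \<Rightarrow> ereal) \<Rightarrow> 'a \<Rightarrow> ereal" where
  "gslope u x = (if u x = \<infinity> then \<infinity>
     else Sup (insert 0 {max 0 (u x - u y) / ereal (dist x y) | y. y \<noteq> x}))"

definition solves_G :: "real \<Rightarrow> ('a::metric_space \<Rightarrow> real) \<Rightarrow> ('a \<Rightarrow> ereal) \<Rightarrow> bool" where
  "solves_G lam l u \<longleftrightarrow> lsc u \<and> (\<forall>x. u x \<noteq> -\<infinity>) \<and> (INF x. u x) = 0 \<and>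
     (\<forall>x. ereal lam * u x + gslope u x = ereal (l x))"

definition H0 :: "('a::metric_space \<Rightarrow> real) \<Rightarrow> bool" where
  "H0 l \<longleftrightarrow> (\<exists>xs :: nat \<Rightarrow> 'a.
     summable (\<lambda>n. l (xs n) * dist (xs n) (xs (Suc n))) \<and> (\<lambda>n. l (xs n)) \<longlonglongrightarrow> 0)"

end

theory Submission
  imports Defs
begin
definition subsol :: "real \<Rightarrow> ('a::metric_space \<Rightarrow> real) \<Rightarrow> ('a \<Rightarrow> real) \<Rightarrow> bool" where
  "subsol lam l w \<longleftrightarrow> (\<forall>x. 0 \<le> w x) \<and> (\<forall>x. lam * w x \<le> l x) \<and>
     (\<forall>x y. w x - w y \<le> (l x - lam * w x) * dist x y)"

lemma gslope_elem:
  assumes "y \<noteq> x"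
  shows "max 0 (ereal (v x) - ereal (v y)) / ereal (dist x y) = ereal (max 0 (v x - v y) / dist x y)"
proof -
  have "max 0 (ereal (v x) - ereal (v y)) = ereal (max 0 (v x - v y))"
    by (cases "v x - v y \<le> 0") (auto simp: max_def)
  then have "max 0 (ereal (v x) - ereal (v y)) / ereal (dist x y) = ereal (max 0 (v x - v y)) / ereal (dist x y)"
    by simp
  also have "\<dots> = ereal (max 0 (v x - v y) / dist x y)" using assms
    by (subst ereal_divide) simp
  finally show ?thesis .
qed

lemma gslope_le:
  fixes v :: "'a::metric_space \<Rightarrow> real"
  assumes "e \<ge> 0" "\<And>y. v x - v y \<le> e * dist x y"
  shows "gslope (\<lambda>x. ereal (v x)) x \<le> ereal e"
proof -
  have gs: "gslope (\<lambda>x. ereal (v x)) x = Sup (insert 0 {max 0 (ereal (v x) - ereal (v y)) / ereal (dist x y) |y. y \<noteq> x})"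
    unfolding gslope_def by simp
  show ?thesis unfolding gs
proof (intro Sup_least)
  fix z assume "z \<in> insert 0 {max 0 (ereal (v x) - ereal (v y)) / ereal (dist x y) |y. y \<noteq> x}"
  then consider "z = 0" | y where "y \<noteq> x" "z = max 0 (ereal (v x) - ereal (v y)) / ereal (dist x y)"
    by blast
  then show "z \<le> ereal e"
  proof cases
    case 1 then show ?thesis using assms by simp
  next
    case 2
    have d: "dist x y > 0" using 2 by simp
    have "max 0 (v x - v y) \<le> e * dist x y" using assms(1) assms(2)[of y] d by simp
    then have "max 0 (v x - v y) / dist x y \<le> e" using d by (simp add: divide_le_eq)
    then show ?thesis using 2(2) gslope_elem[OF 2(1), of v] by simp
  qed
qed
qed

lemma gslope_eq:
  fixes v :: "'a::metric_space \<Rightarrow> real"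
  assumes g0: "g \<ge> 0" and up: "\<And>y. v x - v y \<le> g * dist x y"
    and low: "\<And>e. e > 0 \<Longrightarrow> g \<le> e \<or> (\<exists>y. y \<noteq> x \<and> (g - e) * dist x y \<le> v x - v y)"
  shows "gslope (\<lambda>x. ereal (v x)) x = ereal g"
proof (rule antisym)
  show "gslope (\<lambda>x. ereal (v x)) x \<le> ereal g" by (rule gslope_le[OF g0 up])
next
  let ?A = "insert 0 {max 0 (ereal (v x) - ereal (v y)) / ereal (dist x y) |y. y \<noteq> x}"
  have gs: "gslope (\<lambda>x. ereal (v x)) x = Sup ?A" unfolding gslope_def by simp
  have S0: "0 \<le> Sup ?A" by (rule Sup_upper) simp
  show "ereal g \<le> gslope (\<lambda>x. ereal (v x)) x"
    unfolding gs
  proof (rule ereal_le_epsilon2)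
    fix e :: real assume e: "e > 0"
    from low[OF e] show "ereal g \<le> Sup ?A + ereal e"
    proof
      assume "g \<le> e"
      then have "ereal g \<le> 0 + ereal e" by simp
      also have "\<dots> \<le> Sup ?A + ereal e" using S0 by (intro add_right_mono) 
      finally show ?thesis .
    next
      assume "\<exists>y. y \<noteq> x \<and> (g - e) * dist x y \<le> v x - v y"
      then obtain y where y: "y \<noteq> x" "(g - e) * dist x y \<le> v x - v y" by blast
      have d: "dist x y > 0" using y by simp
      have "g - e \<le> (v x - v y) / dist x y" using y d by (simp add: le_divide_eq)
      also have "\<dots> \<le> max 0 (v x - v y) / dist x y" using d by (intro divide_right_mono) auto
      finally have 1: "g - e \<le> max 0 (v x - v y) / dist x y" .
      have "ereal (max 0 (v x - v y) / dist x y) \<in> ?A" using y gslope_elem[where y=y and x=x and v=v] by force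
      then have "ereal (max 0 (v x - v y) / dist x y) \<le> Sup ?A" by (rule Sup_upper)
      then have "ereal (max 0 (v x - v y) / dist x y) + ereal e \<le> Sup ?A + ereal e"
        by (intro add_right_mono)
      moreover have "ereal g \<le> ereal (max 0 (v x - v y) / dist x y) + ereal e" using 1 by simp
      ultimately show ?thesis by (rule order_trans[rotated])
    qed
  qed
qed

lemma lsc_bound:
  fixes v :: "'a::metric_space \<Rightarrow> real"
  assumes "\<And>x y. v x - v y \<le> L x * dist x y"
  shows "lsc (\<lambda>x. ereal (v x))"
  unfolding lsc_def
proof
  fix c :: ereal
  show "closed {x. ereal (v x) \<le> c}"
    unfolding closed_sequential_limits
  proof (intro allI impI)
    fix s p assume h: "(\<forall>n. s n \<in> {x. ereal (v x) \<le> c}) \<and> s \<longlonglongrightarrow> p"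
    then have sc: "\<And>n. ereal (v (s n)) \<le> c" and lim: "s \<longlonglongrightarrow> p" by auto
    have b: "v p \<le> v (s n) + L p * dist p (s n)" for n using assms[of p "s n"] by simp
    show "p \<in> {x. ereal (v x) \<le> c}"
    proof (cases c)
      case (real r)
      have dl: "(\<lambda>n. dist p (s n)) \<longlonglongrightarrow> 0"
        using lim tendsto_dist_iff[of s p sequentially] by (simp add: dist_commute)
      have "(\<lambda>n. r + L p * dist p (s n)) \<longlonglongrightarrow> r + L p * 0"
        by (intro tendsto_intros dl)
      moreover have "v p \<le> r + L p * dist p (s n)" for n using b[of n] sc[of n] real by simp
      ultimately have "v p \<le> r + L p * 0" by (intro LIMSEQ_le_const) auto
      then show ?thesis using real by simp
    next
      case PInf then show ?thesis by simp
    next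
      case MInf then show ?thesis using sc[of 0] by simp
    qed
  qed
qed

lemma lsc_point:
  fixes l :: "'a::metric_space \<Rightarrow> real"
  assumes "lsc (\<lambda>x. ereal (l x))" "m < l x"
  shows "\<exists>r>0. \<forall>z. dist x z < r \<longrightarrow> m < l z"
proof -
  have "closed {z. ereal (l z) \<le> ereal m}" using assms(1) unfolding lsc_def by blast
  then have "open {z. m < l z}" by (simp add: closed_def Compl_eq not_le)
  then show ?thesis using assms(2) unfolding open_dist by (metis dist_commute mem_Collect_eq)
qed

lemma perron:
  fixes l :: "'a::metric_space \<Rightarrow> real" and P :: "('a \<Rightarrow> real) \<Rightarrow> bool"
    and C :: "('a \<Rightarrow> real) set"
  assumes l_nonneg: "\<And>x. l x \<ge> 0"
    and l_lsc: "lsc (\<lambda>x. ereal (l x))"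
    and lam: "lam \<ge> 0"
    and C_def: "C = {w. subsol lam l w \<and> P w}"
    and P0: "P (\<lambda>_. 0)"
    and bound: "\<And>w x. w \<in> C \<Longrightarrow> w x \<le> B x"
    and Psup: "\<And>f. (\<And>x. f x = (SUP w\<in>C. w x)) \<Longrightarrow> P f"
    and Ppert: "\<And>u w m. P u \<Longrightarrow> m > 0 \<Longrightarrow> (\<And>z. u z \<noteq> w z \<Longrightarrow> m \<le> l z) \<Longrightarrow> P w"
    and small: "\<And>e. e > 0 \<Longrightarrow> \<exists>x. \<forall>w\<in>C. w x \<le> e"
  shows "\<exists>v. solves_G lam l (\<lambda>x. ereal (v x))"
proof -
  define u where "u x = (SUP w\<in>C. w x)" for x
  have zC: "(\<lambda>_. 0) \<in> C" unfolding C_def subsol_def using P0 l_nonneg by simp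
  then have Cne: "C \<noteq> {}" by blast
  have bdd: "bdd_above ((\<lambda>w. w x) ` C)" for x using bound by (auto intro!: bdd_aboveI)
  have upper: "w x \<le> u x" if "w \<in> C" for w x
    unfolding u_def using bdd that by (rule cSUP_upper2) simp
  have least: "u x \<le> c" if "\<And>w. w \<in> C \<Longrightarrow> w x \<le> c" for x c
    unfolding u_def using Cne that by (rule cSUP_least)
  have wsub: "subsol lam l w" if "w \<in> C" for w using that C_def by simp
  have u_nonneg: "0 \<le> u x" for x using upper[OF zC, of x] by simp
  have sub1: "lam * u x \<le> l x" for x
  proof (cases "lam = 0")
    case True then show ?thesis using l_nonneg by simp
  next
    case False
    then have lp: "lam > 0" using lam by simp
    have "u x \<le> l x / lam"
    proof (rule least)
      fix w assume "w \<in> C"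
      then have "lam * w x \<le> l x" using wsub unfolding subsol_def by blast
      then show "w x \<le> l x / lam" using lp by (simp add: le_divide_eq mult.commute)
    qed
    then show ?thesis using lp by (simp add: le_divide_eq mult.commute)
  qed
  have sub2: "u x - u y \<le> (l x - lam * u x) * dist x y" for x y
  proof -
    have pos: "1 + lam * dist x y > 0" using lam by (simp add: add_pos_nonneg)
    have "u x \<le> (u y + l x * dist x y) / (1 + lam * dist x y)"
    proof (rule least)
      fix w assume "w \<in> C"
      then have "w x - w y \<le> (l x - lam * w x) * dist x y" using wsub unfolding subsol_def by blast
      then have "w x * (1 + lam * dist x y) \<le> w y + l x * dist x y" by (simp add: algebra_simps)
      also have "\<dots> \<le> u y + l x * dist x y" using upper[OF \<open>w \<in> C\<close>] by simp
      finally show "w x \<le> (u y + l x * dist x y) / (1 + lam * dist x y)"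
        using pos by (simp add: le_divide_eq)
    qed
    then have "u x * (1 + lam * dist x y) \<le> u y + l x * dist x y" using pos by (simp add: le_divide_eq)
    then show ?thesis by (simp add: algebra_simps)
  qed
  have usub: "subsol lam l u" unfolding subsol_def using u_nonneg sub1 sub2 by blast
  have Pu: "P u" by (rule Psup) (simp add: u_def)
  have uC: "u \<in> C" using usub Pu C_def by simp
  have eq: "gslope (\<lambda>x. ereal (u x)) x = ereal (l x - lam * u x)" for x
  proof (rule gslope_eq)
    show "0 \<le> l x - lam * u x" using sub1[of x] by simp
    show "u x - u y \<le> (l x - lam * u x) * dist x y" for y by (rule sub2)
  next
    fix e :: real assume e: "e > 0"
    define g where "g = l x - lam * u x"
    show "l x - lam * u x \<le> e \<or> (\<exists>y. y \<noteq> x \<and> (l x - lam * u x - e) * dist x y \<le> u x - u y)"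
    proof (rule ccontr)
      assume "\<not> ?thesis"
      then have ge: "g > e" and strict: "\<And>y. y \<noteq> x \<Longrightarrow> u x - u y < (g - e) * dist x y"
        unfolding g_def by (auto simp: not_le)
      define m where "m = l x - e / 4"
      have "lam * u x \<ge> 0" using lam u_nonneg by simp
      then have m0: "m > 0" using ge e unfolding m_def g_def by simp
      have "m < l x" using e unfolding m_def by simp
      then obtain r where r0: "r > 0" and rb: "\<And>z. dist x z < r \<Longrightarrow> m < l z"
        using lsc_point[OF l_lsc] by blast
      define \<tau> where "\<tau> = min (e * r / 2) (e / (4 * (lam + 1)))"
      have t0: "\<tau> > 0" unfolding \<tau>_def using e r0 lam by simp
      have t1: "\<tau> \<le> e * r / 2" unfolding \<tau>_def by (rule min.cobounded1)
      have "\<tau> \<le> e / (4 * (lam + 1))" unfolding \<tau>_def by simp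
      then have "\<tau> * (4 * (lam + 1)) \<le> e" using lam by (simp add: le_divide_eq)
      then have t2: "lam * \<tau> \<le> e / 4" using t0 by (simp add: algebra_simps)
      define s where "s = m - lam * (u x + \<tau>)"
      have s1: "s \<ge> g - e / 2" using t2 unfolding s_def m_def g_def by (simp add: algebra_simps)
      then have s0: "s > 0" using ge e by simp
      define \<psi> where "\<psi> z = u x + \<tau> - s * dist x z" for z
      define w where "w z = max (u z) (\<psi> z)" for z
      have out: "\<psi> z \<le> u z" if "dist x z \<ge> r" for z
      proof -
        have "z \<noteq> x" using that r0 by auto
        then have a: "u x - u z < (g - e) * dist x z" by (rule strict)
        have "(e / 2) * r \<le> (s - g + e) * dist x z"
          using s1 e r0 that by (intro mult_mono) auto
        then have "e * r / 2 \<le> (s - g + e) * dist x z" by simp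
        then have "\<tau> \<le> (s - g + e) * dist x z" using t1 by simp
        then show ?thesis using a unfolding \<psi>_def by (simp add: algebra_simps)
      qed
      have diff: "m \<le> l z" if "u z \<noteq> w z" for z
      proof -
        have "\<psi> z > u z" using that unfolding w_def by auto
        then have "dist x z < r" using out[of z] by linarith
        then show ?thesis using rb by force
      qed
      have psi_le: "\<psi> z \<le> u x + \<tau>" for z unfolding \<psi>_def using s0 by simp
      have lpsi: "lam * \<psi> z \<le> m - s" for z
        using mult_left_mono[OF psi_le lam] unfolding s_def by simp
      have wsub: "subsol lam l w" unfolding subsol_def
      proof (intro conjI allI)
        fix z
        show "0 \<le> w z" unfolding w_def using u_nonneg[of z] by simp
        show "lam * w z \<le> l z"
        proof (cases "\<psi> z \<le> u z")
          case True then show ?thesis unfolding w_def using sub1 by simp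
        next
          case False
          then have "u z \<noteq> w z" unfolding w_def by simp
          then have "m \<le> l z" by (rule diff)
          then show ?thesis using False lpsi[of z] s0 unfolding w_def by simp
        qed
      next
        fix z y
        show "w z - w y \<le> (l z - lam * w z) * dist z y"
        proof (cases "\<psi> z \<le> u z")
          case True
          then have "w z = u z" unfolding w_def by simp
          moreover have "u y \<le> w y" unfolding w_def by simp
          ultimately show ?thesis using sub2[of z y] by simp
        next
          case False
          then have wz: "w z = \<psi> z" unfolding w_def by simp
          have "u z \<noteq> w z" using False wz by simp
          then have mz: "m \<le> l z" by (rule diff)
          have "\<psi> y \<le> w y" unfolding w_def by simp
          moreover have "\<psi> z - \<psi> y \<le> s * dist z y"
          proof -
            have "dist x y \<le> dist x z + dist z y" by (rule dist_triangle)
            then have "s * dist x y \<le> s * (dist x z + dist z y)" using s0 by (intro mult_left_mono) auto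
            then show ?thesis unfolding \<psi>_def by (simp add: algebra_simps)
          qed
          moreover have "s * dist z y \<le> (l z - lam * \<psi> z) * dist z y"
            using lpsi[of z] mz by (intro mult_right_mono) auto
          ultimately show ?thesis using wz by simp
        qed
      qed
      have "P w" using Ppert[OF Pu m0 diff] .
      then have "w \<in> C" using wsub C_def by simp
      then have "w x \<le> u x" by (rule upper)
      moreover have "\<psi> x = u x + \<tau>" unfolding \<psi>_def by simp
      then have "w x \<ge> u x + \<tau>" unfolding w_def by simp
      ultimately show False using t0 by simp
    qed
  qed
  have inf: "(INF x. ereal (u x)) = 0"
  proof (rule antisym)
    show "0 \<le> (INF x. ereal (u x))" using u_nonneg by (intro INF_greatest) simp
    show "(INF x. ereal (u x)) \<le> 0"
    proof (rule ereal_le_epsilon2)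
      fix e :: real assume "e > 0"
      then obtain x where "\<forall>w\<in>C. w x \<le> e" using small by blast
      then have "u x \<le> e" by (intro least) blast
      then have "(INF x. ereal (u x)) \<le> ereal e" by (intro INF_lower2[of x]) auto
      then show "(INF x. ereal (u x)) \<le> 0 + ereal e" by simp
    qed
  qed
  have "lsc (\<lambda>x. ereal (u x))"
  proof (rule lsc_bound)
    fix x y
    have "lam * u x \<ge> 0" using lam u_nonneg by simp
    then have "(l x - lam * u x) * dist x y \<le> l x * dist x y" by (intro mult_right_mono) auto
    then show "u x - u y \<le> l x * dist x y" using sub2[of x y] by simp
  qed
  then have "solves_G lam l (\<lambda>x. ereal (u x))"
    unfolding solves_G_def using inf eq by simp
  then show ?thesis by blast
qed

lemma ekeland:
  fixes f :: "'a::metric_space \<Rightarrow> real"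
  assumes cpl: "complete (UNIV :: 'a set)" and f0: "\<And>x. f x \<ge> 0"
    and fc: "\<And>c. closed {x. f x \<le> c}" and e: "e > 0"
  shows "\<exists>x. f x + e * dist z x \<le> f z \<and> (\<forall>y. f x - e * dist x y \<le> f y)"
proof -
  define S where "S x = {y. f y + e * dist x y \<le> f x}" for x
  have self: "x \<in> S x" for x unfolding S_def by simp
  have trans: "S y \<subseteq> S x" if "y \<in> S x" for x y
  proof
    fix q assume "q \<in> S y"
    then have "f q + e * dist y q \<le> f y" unfolding S_def by simp
    moreover have "f y + e * dist x y \<le> f x" using that unfolding S_def by simp
    moreover have "e * dist x q \<le> e * dist x y + e * dist y q"
      using dist_triangle[of x q y] e by (simp add: distrib_left[symmetric])
    ultimately show "q \<in> S x" unfolding S_def by simp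
  qed
  define I where "I x = Inf (f ` S x)" for x
  have bddI: "bdd_below (f ` S x)" for x using f0 by (auto intro!: bdd_belowI)
  have Ilow: "I x \<le> f y" if "y \<in> S x" for x y
    unfolding I_def using bddI that by (rule cINF_lower)
  have ex: "\<exists>y. y \<in> S x \<and> f y \<le> I x + (1/2)^n" for x n
  proof -
    have lt: "Inf (f ` S x) < I x + (1/2)^n" unfolding I_def by simp
    have ne: "f ` S x \<noteq> {}" using self[of x] by blast
    obtain q where "q \<in> f ` S x" "q < I x + (1/2)^n"
      using cInf_lessD[OF ne lt] by blast
    then show ?thesis by force
  qed
  define nx where "nx x n = (SOME y. y \<in> S x \<and> f y \<le> I x + (1/2)^n)" for x n
  have nx: "nx x n \<in> S x \<and> f (nx x n) \<le> I x + (1/2)^n" for x n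
    unfolding nx_def by (rule someI_ex[OF ex])
  define s where "s = rec_nat z (\<lambda>n x. nx x n)"
  have s0: "s 0 = z" unfolding s_def by simp
  have sS: "s (Suc n) = nx (s n) n" for n unfolding s_def by simp
  have nest: "s m \<in> S (s n) \<and> S (s m) \<subseteq> S (s n)" if "n \<le> m" for n m
    using that
  proof (induction m rule: dec_induct)
    case base then show ?case using self by simp
  next
    case (step m)
    have "s (Suc m) \<in> S (s m)" using nx sS by simp
    then show ?case using step trans by blast
  qed
  have smallS: "e * dist (s (Suc n)) y \<le> (1/2)^n" if "y \<in> S (s (Suc n))" for n y
  proof -
    have "y \<in> S (s n)" using nest[of n "Suc n"] that by auto
    then have "I (s n) \<le> f y" by (rule Ilow)
    moreover have "f (s (Suc n)) \<le> I (s n) + (1/2)^n" using nx sS by simp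
    moreover have "f y + e * dist (s (Suc n)) y \<le> f (s (Suc n))" using that unfolding S_def by simp
    ultimately show ?thesis by simp
  qed
  have dS: "dist (s (Suc n)) (s m) \<le> (1/2)^n / e" if "Suc n \<le> m" for n m
    using smallS[where n=n and y="s m"] nest[OF that] e by (simp add: le_divide_eq mult.commute)
  have "Cauchy s"
    unfolding Cauchy_def
  proof (intro allI impI)
    fix \<epsilon> :: real assume "\<epsilon> > 0"
    then have "\<epsilon> * e / 2 > 0" using e by simp
    then obtain n where n: "(1/2::real)^n < \<epsilon> * e / 2" using real_arch_pow_inv[of "\<epsilon> * e / 2" "1/2"] by auto
    have n2: "(1/2::real)^n / e < \<epsilon> / 2" using n e by (simp add: divide_less_eq mult.commute)
    show "\<exists>M. \<forall>m\<ge>M. \<forall>k\<ge>M. dist (s m) (s k) < \<epsilon>"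
    proof (intro exI allI impI)
      fix m k assume "Suc n \<le> m" "Suc n \<le> k"
      then have "dist (s (Suc n)) (s m) \<le> (1/2)^n / e" "dist (s (Suc n)) (s k) \<le> (1/2)^n / e"
        using dS by auto
      moreover have "dist (s m) (s k) \<le> dist (s (Suc n)) (s m) + dist (s (Suc n)) (s k)"
        by (rule dist_triangle3)
      ultimately show "dist (s m) (s k) < \<epsilon>" using n2 by linarith
    qed
  qed
  then obtain p where lim: "s \<longlonglongrightarrow> p" using cpl unfolding complete_def by blast
  have pS: "p \<in> S (s n)" for n
  proof -
    have aux: "f p \<le> f (s n) - e * dist (s n) p + \<eta>" if \<eta>: "\<eta> > 0" for \<eta>
    proof -
      let ?c = "f (s n) - e * dist (s n) p + \<eta>"
      have dl: "(\<lambda>k. dist (s n) (s k)) \<longlonglongrightarrow> dist (s n) p"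
        by (intro tendsto_intros lim)
      have "dist (s n) p - \<eta> / e < dist (s n) p" using \<eta> e by simp
      then have ev1: "eventually (\<lambda>k. dist (s n) p - \<eta> / e < dist (s n) (s k)) sequentially"
        using order_tendstoD(1)[OF dl] by blast
      have ev: "eventually (\<lambda>k. s k \<in> {x. f x \<le> ?c}) sequentially"
        using ev1 eventually_ge_at_top[of n]
      proof eventually_elim
        case (elim k)
        have "f (s k) + e * dist (s n) (s k) \<le> f (s n)" using nest[OF elim(2)] unfolding S_def by simp
        moreover have "e * (dist (s n) p - \<eta> / e) \<le> e * dist (s n) (s k)"
          using elim(1) e by (intro mult_left_mono) auto
        then have "e * dist (s n) p - \<eta> \<le> e * dist (s n) (s k)" using e by (simp add: right_diff_distrib)
        ultimately show ?case by simp
      qed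
      have "p \<in> {x. f x \<le> ?c}"
        by (rule Lim_in_closed_set[OF fc ev _ lim]) simp
      then show ?thesis by simp
    qed
    have "f p \<le> f (s n) - e * dist (s n) p"
      by (rule field_le_epsilon[OF aux])
    then show ?thesis unfolding S_def by simp
  qed
  have min: "f p - e * dist p y \<le> f y" for y
  proof (rule ccontr)
    assume neg: "\<not> ?thesis"
    then have yp: "y \<in> S p" unfolding S_def by simp
    then have yS: "y \<in> S (s (Suc n))" for n using trans[OF pS[of "Suc n"]] by blast
    have "(\<lambda>n. s (Suc n)) \<longlonglongrightarrow> y"
    proof -
      have "(\<lambda>n. dist (s (Suc n)) y) \<longlonglongrightarrow> 0"
      proof (rule tendsto_sandwich[of "\<lambda>_. 0" _ _ "\<lambda>n. (1/2)^n / e"])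
        show "\<forall>\<^sub>F n in sequentially. 0 \<le> dist (s (Suc n)) y" by simp
        show "\<forall>\<^sub>F n in sequentially. dist (s (Suc n)) y \<le> (1/2)^n / e"
          using smallS[OF yS] e by (simp add: le_divide_eq mult.commute)
        show "(\<lambda>_. 0::real) \<longlonglongrightarrow> 0" by simp
        have "(\<lambda>n. (1/2::real)^n / e) \<longlonglongrightarrow> 0 / e"
          using e by (intro tendsto_intros) simp_all
        then show "(\<lambda>n. (1/2::real)^n / e) \<longlonglongrightarrow> 0" by simp
      qed
      then show ?thesis using tendsto_dist_iff[of "\<lambda>n. s (Suc n)" y sequentially] by simp
    qed
    moreover have "(\<lambda>n. s (Suc n)) \<longlonglongrightarrow> p" using lim by (rule LIMSEQ_Suc)
    ultimately have "y = p" by (rule LIMSEQ_unique)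
    then show False using neg by simp
  qed
  have "f p + e * dist z p \<le> f z" using pS[of 0] unfolding s0 S_def by simp
  then show ?thesis using min by blast
qed

lemma inf_small:
  fixes l :: "'a \<Rightarrow> real"
  assumes "\<And>x. l x \<ge> 0" "(INF x. l x) = 0" "e > 0"
  shows "\<exists>x. l x < e"
proof -
  have "bdd_below (range l)" using assms(1) by (auto intro!: bdd_belowI)
  then show ?thesis using assms(2,3) cINF_less_iff[of UNIV l e] by auto
qed

lemma part1:
  fixes l :: "'a::metric_space \<Rightarrow> real"
  assumes l_nonneg: "\<And>x. l x \<ge> 0"
    and l_lsc: "lsc (\<lambda>x. ereal (l x))"
    and l_inf: "(INF x. l x) = 0"
    and lam: "lam > 0"
  shows "\<exists>v. solves_G lam l (\<lambda>x. ereal (v x))"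
proof (rule perron[OF l_nonneg l_lsc _ refl, where P="\<lambda>_. True" and B="\<lambda>x. l x / lam"])
  show "0 \<le> lam" using lam by simp
  show "w x \<le> l x / lam" if "w \<in> {w. subsol lam l w \<and> True}" for w x
    using that lam unfolding subsol_def by (simp add: le_divide_eq mult.commute)
  fix e :: real assume e: "e > 0"
  have "e * lam > 0" using e lam by simp
  then obtain x where x: "l x < e * lam" using inf_small[OF l_nonneg l_inf] by blast
  have "w x \<le> e" if "w \<in> {w. subsol lam l w \<and> True}" for w
  proof -
    have "lam * w x \<le> l x" using that unfolding subsol_def by blast
    then have "lam * w x < lam * e" using x by (simp add: mult.commute)
    then show ?thesis using lam by simp
  qed
  then have "\<forall>w\<in>{w. subsol lam l w \<and> True}. w x \<le> e" by blast
  then show "\<exists>x. \<forall>w\<in>{w. subsol lam l w \<and> True}. w x \<le> e" by blast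
qed auto

lemma part2:
  fixes l :: "'a::metric_space \<Rightarrow> real"
  assumes l_nonneg: "\<And>x. l x \<ge> 0"
    and l_lsc: "lsc (\<lambda>x. ereal (l x))"
    and h: "H0 l"
  shows "\<exists>v. solves_G 0 l (\<lambda>x. ereal (v x))"
proof -
  obtain xs :: "nat \<Rightarrow> 'a" where sm: "summable (\<lambda>n. l (xs n) * dist (xs n) (xs (Suc n)))"
    and lz: "(\<lambda>n. l (xs n)) \<longlonglongrightarrow> 0" using h unfolding H0_def by blast
  define a where "a n = l (xs n) * dist (xs n) (xs (Suc n))" for n
  have a0: "a n \<ge> 0" for n unfolding a_def using l_nonneg by simp
  have sma: "summable a" using sm unfolding a_def .
  define T where "T n = suminf a - (\<Sum>k<n. a k)" for n
  have psle: "(\<Sum>k<n. a k) \<le> suminf a" for n using sma a0 by (intro sum_le_suminf) auto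
  have Tlim: "T \<longlonglongrightarrow> 0"
  proof -
    have "(\<lambda>n. suminf a - (\<Sum>k<n. a k)) \<longlonglongrightarrow> suminf a - suminf a"
      by (intro tendsto_intros summable_LIMSEQ sma)
    then show ?thesis unfolding T_def by simp
  qed
  define P where "P w \<longleftrightarrow> (\<forall>e>0. \<forall>N. \<exists>n\<ge>N. w (xs n) < e)" for w :: "'a \<Rightarrow> real"
  have chain: "w (xs n) \<le> w (xs N) + ((\<Sum>k<N. a k) - (\<Sum>k<n. a k))"
    if "subsol 0 l w" "n \<le> N" for w n N
    using that(2)
  proof (induction N rule: dec_induct)
    case base then show ?case by simp
  next
    case (step N)
    have "w (xs N) - w (xs (Suc N)) \<le> a N"
      using that(1) unfolding subsol_def a_def by simp
    then show ?case using step by simp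
  qed
  have tailb: "w (xs n) \<le> T n" if tw: "subsol 0 l w" "P w" for w n
  proof (rule field_le_epsilon)
    fix e :: real assume "e > 0"
    then obtain N where N: "N \<ge> n" "w (xs N) < e" using tw(2) unfolding P_def by blast
    have "w (xs n) \<le> w (xs N) + ((\<Sum>k<N. a k) - (\<Sum>k<n. a k))" by (rule chain[OF tw(1) N(1)])
    then show "w (xs n) \<le> T n + e" using N(2) psle[of N] unfolding T_def by simp
  qed
  have evT: "\<exists>n\<ge>N. T n < e" if "e > 0" for N e
  proof -
    from order_tendstoD(2)[OF Tlim that] obtain M where "\<forall>n\<ge>M. T n < e"
      unfolding eventually_sequentially by blast
    then show ?thesis by (intro exI[of _ "max N M"]) simp
  qed
  define C where "C = {w. subsol 0 l w \<and> P w}"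
  have zC: "(\<lambda>_. 0) \<in> C" unfolding C_def subsol_def P_def using l_nonneg by auto
  show ?thesis
  proof (rule perron[OF l_nonneg l_lsc _ C_def, where B="\<lambda>x. T 0 + l x * dist x (xs 0)"])
    show "(0::real) \<le> 0" by simp
    show "P (\<lambda>_. 0)" unfolding P_def by auto
  next
    fix w x assume "w \<in> C"
    then have ws: "subsol 0 l w" "P w" unfolding C_def by auto
    have "w x - w (xs 0) \<le> l x * dist x (xs 0)" using ws(1) unfolding subsol_def by simp
    then show "w x \<le> T 0 + l x * dist x (xs 0)" using tailb[OF ws, of 0] by simp
  next
    fix f :: "'a \<Rightarrow> real" assume f: "\<And>x. f x = (SUP w\<in>C. w x)"
    have fT: "f (xs n) \<le> T n" for n
      unfolding f using zC by (intro cSUP_least) (auto simp: C_def intro: tailb)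
    show "P f" unfolding P_def
    proof (intro allI impI)
      fix e :: real and N assume "e > 0"
      then obtain n where "n \<ge> N" "T n < e" using evT by blast
      then show "\<exists>n\<ge>N. f (xs n) < e" using fT[of n] by force
    qed
  next
    fix u w :: "'a \<Rightarrow> real" and m :: real
    assume Pu: "P u" and m: "m > 0" and d: "\<And>z. u z \<noteq> w z \<Longrightarrow> m \<le> l z"
    from order_tendstoD(2)[OF lz m] obtain M where M: "\<forall>n\<ge>M. l (xs n) < m"
      unfolding eventually_sequentially by blast
    show "P w" unfolding P_def
    proof (intro allI impI)
      fix e :: real and N assume "e > 0"
      then obtain n where n: "n \<ge> max N M" "u (xs n) < e" using Pu unfolding P_def by blast
      then have "u (xs n) = w (xs n)" using M d by force
      then show "\<exists>n\<ge>N. w (xs n) < e" using n by (intro exI[of _ n]) auto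
    qed
  next
    fix e :: real assume "e > 0"
    then obtain n where "T n < e" using evT by blast
    then have "\<forall>w\<in>C. w (xs n) \<le> e" using tailb unfolding C_def by (auto intro: order_trans[OF _ less_imp_le])
    then show "\<exists>x. \<forall>w\<in>C. w x \<le> e" by blast
  qed
qed

lemma part3:
  fixes l :: "'a::metric_space \<Rightarrow> real"
  assumes cpl: "complete (UNIV :: 'a set)"
    and sol: "solves_G 0 l u"
  shows "H0 l"
proof -
  have lscu: "lsc u" and ninf: "\<And>x. u x \<noteq> -\<infinity>" and infu: "(INF x. u x) = 0"
    and eq: "\<And>x. ereal 0 * u x + gslope u x = ereal (l x)"
    using sol unfolding solves_G_def by auto
  have gs: "gslope u x = ereal (l x)" for x using eq[of x] by (simp add: zero_ereal_def[symmetric])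
  have pinf: "u x \<noteq> \<infinity>" for x using gs[of x] unfolding gslope_def by auto
  define f where "f x = real_of_ereal (u x)" for x
  have uf: "u = (\<lambda>x. ereal (f x))" unfolding f_def proof (intro ext)
    fix x show "u x = ereal (real_of_ereal (u x))" using pinf[of x] ninf[of x] by (cases "u x") auto
  qed
  have f0: "f x \<ge> 0" for x
  proof -
    have "(INF x. u x) \<le> u x" by (rule INF_lower) simp
    then show ?thesis using infu uf by simp
  qed
  have fc: "closed {x. f x \<le> c}" for c
  proof -
    have "closed {x. u x \<le> ereal c}" using lscu unfolding lsc_def by blast
    then show ?thesis using uf by simp
  qed
  have gsf: "gslope (\<lambda>x. ereal (f x)) x = ereal (l x)" for x using gs uf by simp
  define pick where "pick e z = (SOME x. f x + e * dist z x \<le> f z \<and> (\<forall>y. f x - e * dist x y \<le> f y))"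
    for e :: real and z
  have pick: "f (pick e z) + e * dist z (pick e z) \<le> f z \<and> (\<forall>y. f (pick e z) - e * dist (pick e z) y \<le> f y)"
    if "e > 0" for e z
    unfolding pick_def by (rule someI_ex[OF ekeland[OF cpl f0 fc that]])
  have lsmall: "l (pick e z) \<le> e" if "e > 0" for e z
  proof -
    have "f (pick e z) - f q \<le> e * dist (pick e z) q" for q
    proof -
      have "f (pick e z) - e * dist (pick e z) q \<le> f q" using pick[OF that, of z] by blast
      then show ?thesis by linarith
    qed
    then have "gslope (\<lambda>x. ereal (f x)) (pick e z) \<le> ereal e"
      using that by (intro gslope_le) auto
    then show ?thesis using gsf by simp
  qed
  obtain z0 :: 'a where True by blast
  define y where "y = rec_nat (pick 1 z0) (\<lambda>n x. pick ((1/2)^(Suc n)) x)"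
  have y0: "y 0 = pick 1 z0" unfolding y_def by simp
  have yS: "y (Suc n) = pick ((1/2)^(Suc n)) (y n)" for n unfolding y_def by simp
  have ly: "l (y n) \<le> (1/2)^n" for n
  proof (cases n)
    case 0 then show ?thesis using lsmall[of 1 z0] y0 by simp
  next
    case (Suc k)
    have "(0::real) < (1/2)^(Suc k)" by simp
    then show ?thesis using lsmall[of "(1/2)^(Suc k)" "y k"] yS[of k] Suc by simp
  qed
  have desc: "f (y (Suc n)) + (1/2)^(Suc n) * dist (y n) (y (Suc n)) \<le> f (y n)" for n
    using pick[of "(1/2)^(Suc n)" "y n"] yS by simp
  define a where "a n = l (y n) * dist (y n) (y (Suc n))" for n
  have l0: "l x \<ge> 0" for x
  proof -
    have "0 \<le> gslope (\<lambda>x. ereal (f x)) x" unfolding gslope_def by (auto intro: Sup_upper)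
    then show ?thesis using gsf by simp
  qed
  have a0: "a n \<ge> 0" for n unfolding a_def using l0 by simp
  have ab: "a n \<le> 2 * (f (y n) - f (y (Suc n)))" for n
  proof -
    have "a n \<le> (1/2)^n * dist (y n) (y (Suc n))" unfolding a_def using ly by (intro mult_right_mono) auto
    also have "\<dots> = 2 * ((1/2)^(Suc n) * dist (y n) (y (Suc n)))" by simp
    also have "\<dots> \<le> 2 * (f (y n) - f (y (Suc n)))" using desc[of n] by simp
    finally show ?thesis .
  qed
  have ps: "(\<Sum>k<N. a k) \<le> 2 * (f (y 0) - f (y N))" for N
  proof (induction N)
    case 0 then show ?case by simp
  next
    case (Suc N) then show ?case using ab[of N] by simp
  qed
  have "summable a"
  proof (rule summableI_nonneg_bounded[OF a0])
    fix N show "sum a {..<N} \<le> 2 * f (y 0)" using ps[of N] f0[of "y N"] by simp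
  qed
  moreover have "(\<lambda>n. l (y n)) \<longlonglongrightarrow> 0"
  proof (rule tendsto_sandwich[of "\<lambda>_. 0" _ _ "\<lambda>n. (1/2)^n"])
    show "\<forall>\<^sub>F n in sequentially. 0 \<le> l (y n)" using l0 by simp
    show "\<forall>\<^sub>F n in sequentially. l (y n) \<le> (1/2)^n" using ly by simp
    show "(\<lambda>_. 0::real) \<longlonglongrightarrow> 0" by simp
    show "(\<lambda>n. (1/2::real)^n) \<longlonglongrightarrow> 0" by (intro LIMSEQ_power_zero) simp
  qed
  ultimately show ?thesis unfolding H0_def a_def by blast
qed

theorem corollary3p8:
  fixes l :: "'a::metric_space \<Rightarrow> real"
  assumes l_nonneg: "\<And>x. l x \<ge> 0"
    and l_lsc: "lsc (\<lambda>x. ereal (l x))"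
    and l_inf: "(INF x. l x) = 0"
  shows "(\<forall>lam>0. \<exists>v :: 'a \<Rightarrow> real. solves_G lam l (\<lambda>x. ereal (v x)))
    \<and> (H0 l \<longrightarrow> (\<exists>v :: 'a \<Rightarrow> real. solves_G 0 l (\<lambda>x. ereal (v x))))
    \<and> (complete (UNIV :: 'a set) \<longrightarrow> ((\<exists>u. solves_G 0 l u) \<longleftrightarrow> H0 l))"
  using part1[OF l_nonneg l_lsc l_inf] part2[OF l_nonneg l_lsc] part3 by blast

end
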